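(* Let $\mathbb O=\mathbb C[[t]]$, $\mathbb K=\mathbb C((t))$. For integers $i,j\ge0$ and a polynomial $q\in t\mathbb C[t]$ put $T_{ij}(q)=\begin{pmatrix}1&t^{-i}&q(t^{-1})\\0&1&t^{-j}\\0&0&1\end{pmatrix}$. (a) Every double coset in $\mathbf{GL}(3,\mathbb O)\backslash\mathbf{GL}(3,\mathbb K)/\mathbf{Diag}(3,\mathbb K)$ contains a matrix of the form $T_{ij}(q)$. (b) If $T_{ij}(q_1)$ and $T_{kl}(q_2)$ lie in the same double coset, then $i=k$ and $j=l$. (c) $T_{ij}(q_1)$ and $T_{ij}(q_2)$ lie in the same double coset if and only if $q_2(t^{-1})=\big[y_1q_1(t^{-1})+(y_2-y_1)t^{-i-j}\big]$ for some $y_1,y_2\in\mathbb O^\times$ with $y_2\equiv1\pmod{t^j}$ and $y_2\equiv y_1\pmod{t^i}$.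
   Context: $\mathbf{Diag}(3,\mathbb K)$ is the group of invertible diagonal matrices. For $f=\sum_{s\ge-N}a_st^s\in\mathbb K$, $[f]:=\sum_{s=-N}^{-1}a_st^s$ denotes its principal part (the terms of negative degree). $\mathbb O^\times$ is the unit group of $\mathbb O$. *)

theory Defs
  imports "HOL-Computational_Algebra.Formal_Laurent_Series"
          "Jordan_Normal_Form.Matrix"
begin

text \<open>K = C((t)) is the type complex fls; t is fls_X. Matrices are Jordan_Normal_Form
  matrices (3 x 3, indices 0,1,2).\<close>

definition in_O :: "complex fls \<Rightarrow> bool" where
  "in_O f \<longleftrightarrow> f = 0 \<or> fls_subdegree f \<ge> 0"

definition unit_O :: "complex fls \<Rightarrow> bool" where
  "unit_O f \<longleftrightarrow> in_O f \<and> (\<exists>g. in_O g \<and> f * g = 1)"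

definition cong_O :: "complex fls \<Rightarrow> complex fls \<Rightarrow> nat \<Rightarrow> bool" where
  "cong_O a b n \<longleftrightarrow> (\<exists>z. in_O z \<and> a - b = fls_X ^ n * z)"

definition GL3K :: "complex fls mat set" where
  "GL3K = {A. A \<in> carrier_mat 3 3 \<and> invertible_mat A}"

definition GL3O :: "complex fls mat set" where
  "GL3O = {A. A \<in> carrier_mat 3 3 \<and> (\<forall>i<3. \<forall>j<3. in_O (A $$ (i,j))) \<and>
     (\<exists>B. B \<in> carrier_mat 3 3 \<and> (\<forall>i<3. \<forall>j<3. in_O (B $$ (i,j))) \<and>
          A * B = 1\<^sub>m 3 \<and> B * A = 1\<^sub>m 3)}"

definition Diag3K :: "complex fls mat set" where
  "Diag3K = {D. D \<in> carrier_mat 3 3 \<and> (\<forall>i<3. \<forall>j<3. i \<noteq> j \<longrightarrow> D $$ (i,j) = 0) \<and>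
     (\<forall>i<3. D $$ (i,i) \<noteq> 0)}"

definition same_dcoset :: "complex fls mat \<Rightarrow> complex fls mat \<Rightarrow> bool" where
  "same_dcoset A B \<longleftrightarrow> (\<exists>g d. g \<in> GL3O \<and> d \<in> Diag3K \<and> B = g * A * d)"

definition in_tCt :: "complex poly \<Rightarrow> bool" where
  "in_tCt q \<longleftrightarrow> coeff q 0 = 0"

definition eval_tinv :: "complex poly \<Rightarrow> complex fls" where
  "eval_tinv q = (\<Sum>n\<le>degree q. fls_const (coeff q n) * fls_X_inv ^ n)"

text \<open>principal part [f]: the terms of negative degree (fls_prpart f is the polynomial
  p with p(t^{-1}) = [f])\<close>
definition principal_part :: "complex fls \<Rightarrow> complex fls" where
  "principal_part f = eval_tinv (fls_prpart f)"

definition T :: "nat \<Rightarrow> nat \<Rightarrow> complex poly \<Rightarrow> complex fls mat" where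
  "T i j q = mat_of_rows_list 3
     [[1, fls_X_inv ^ i, eval_tinv q],
      [0, 1, fls_X_inv ^ j],
      [0, 0, 1]]"

end

theory Submission imports Defs begin

definition M3 :: "'a \<Rightarrow> 'a \<Rightarrow> 'a \<Rightarrow> 'a \<Rightarrow> 'a \<Rightarrow> 'a \<Rightarrow> 'a \<Rightarrow> 'a \<Rightarrow> 'a \<Rightarrow> 'a mat" where
  "M3 a b c d e f g h k = mat_of_rows_list 3 [[a,b,c],[d,e,f],[g,h,k]]"

lemma less3: "(i::nat) < 3 \<longleftrightarrow> i = 0 \<or> i = 1 \<or> i = 2" by auto

lemma M3_carrier[simp]: "M3 a b c d e f g h k \<in> carrier_mat 3 3"
  and M3_dim[simp]: "dim_row (M3 a b c d e f g h k) = 3" "dim_col (M3 a b c d e f g h k) = 3"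
  by (auto simp: M3_def mat_of_rows_list_def)

lemma M3_index[simp]:
  "M3 a b c d e f g h k $$ (0,0) = a" "M3 a b c d e f g h k $$ (0,1) = b" "M3 a b c d e f g h k $$ (0,2) = c"
  "M3 a b c d e f g h k $$ (1,0) = d" "M3 a b c d e f g h k $$ (1,1) = e" "M3 a b c d e f g h k $$ (1,2) = f"
  "M3 a b c d e f g h k $$ (2,0) = g" "M3 a b c d e f g h k $$ (2,1) = h" "M3 a b c d e f g h k $$ (2,2) = k"
  by (auto simp: M3_def mat_of_rows_list_def)

lemma M3_index_gen: "i < 3 \<Longrightarrow> j < 3 \<Longrightarrow> M3 a b c d e f g h k $$ (i,j) = [[a,b,c],[d,e,f],[g,h,k]] ! i ! j"
  by (auto simp: M3_def mat_of_rows_list_def)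

lemma mat3_eq: "A \<in> carrier_mat 3 3 \<Longrightarrow> A = M3 (A$$(0,0)) (A$$(0,1)) (A$$(0,2)) (A$$(1,0)) (A$$(1,1)) (A$$(1,2)) (A$$(2,0)) (A$$(2,1)) (A$$(2,2))"
  by (rule eq_matI) (auto simp: less3 M3_index_gen)

lemma M3_eq_iff: "M3 a b c d e f g h k = M3 a' b' c' d' e' f' g' h' k' \<longleftrightarrow>
  a = a' \<and> b = b' \<and> c = c' \<and> d = d' \<and> e = e' \<and> f = f' \<and> g = g' \<and> h = h' \<and> k = k'"
  by (metis M3_index)

lemma one3: "(1\<^sub>m 3 :: 'a::{zero,one} mat) = M3 1 0 0 0 1 0 0 0 1"
  by (rule eq_matI) (auto simp: less3 M3_index_gen)

lemma M3_mult: "M3 a b c d e f g h k * M3 a' b' c' d' e' f' g' h' k' =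
  M3 (a*a'+b*d'+c*g') (a*b'+b*e'+c*h') (a*c'+b*f'+c*k')
     (d*a'+e*d'+f*g') (d*b'+e*e'+f*h') (d*c'+e*f'+f*k')
     (g*a'+h*d'+k*g') (g*b'+h*e'+k*h') (g*c'+h*f'+k*k')"
  (is "?L = ?R")
proof (rule eq_matI)
  fix i j assume "i < dim_row ?R" "j < dim_col ?R"
  then have "i = 0 \<or> i = 1 \<or> i = 2" "j = 0 \<or> j = 1 \<or> j = 2" by auto
  then show "?L $$ (i,j) = ?R $$ (i,j)"
    by (auto simp: index_mult_mat scalar_prod_def numeral_3_eq_3 row_def col_def M3_index_gen)
qed auto


type_synonym K = "complex fls"

lemma inO_iff: "in_O f \<longleftrightarrow> (\<forall>n<0. fls_nth f n = 0)"
proof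
  assume "in_O f" then show "\<forall>n<0. fls_nth f n = 0" unfolding in_O_def by auto
next
  assume "\<forall>n<0. fls_nth f n = 0"
  then show "in_O f" unfolding in_O_def using fls_subdegree_ge0I by blast
qed

lemma inO_0[simp]: "in_O 0" and inO_1[simp]: "in_O 1"
  by (auto simp: inO_iff)

lemma inO_add[intro]: "in_O f \<Longrightarrow> in_O g \<Longrightarrow> in_O (f + g)"
  and inO_diff[intro]: "in_O f \<Longrightarrow> in_O g \<Longrightarrow> in_O (f - g)"
  and inO_uminus[intro]: "in_O f \<Longrightarrow> in_O (- f)"
  by (auto simp: inO_iff)

lemma inO_uminus_iff[simp]: "in_O (- f) = in_O f"
  by (auto simp: inO_iff)

lemma inO_mult[intro]: "in_O (f::K) \<Longrightarrow> in_O g \<Longrightarrow> in_O (f * g)"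
  unfolding in_O_def by (cases "f = 0"; cases "g = 0") auto

lemma inO_X_pow[simp]: "in_O ((fls_X::K) ^ n)"
  unfolding in_O_def by simp

lemma unitO_iff: "unit_O (f::K) \<longleftrightarrow> f \<noteq> 0 \<and> fls_subdegree f = 0"
proof
  assume "unit_O f"
  then obtain g where g: "in_O f" "in_O g" "f * g = 1" unfolding unit_O_def by auto
  then have "f \<noteq> 0" "g \<noteq> 0" by auto
  then have "fls_subdegree f + fls_subdegree g = 0"
    using g(3) fls_subdegree_mult[of f g] by simp
  with g \<open>f\<noteq>0\<close> \<open>g\<noteq>0\<close> show "f \<noteq> 0 \<and> fls_subdegree f = 0" unfolding in_O_def by auto
next
  assume a: "f \<noteq> 0 \<and> fls_subdegree f = 0"
  then show "unit_O f" unfolding unit_O_def in_O_def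
    by (intro conjI exI[of _ "inverse f"]) auto
qed

lemma unitO_inO: "unit_O f \<Longrightarrow> in_O f"
  by (simp add: unit_O_def)

lemma unitO_nz: "unit_O (f::K) \<Longrightarrow> f \<noteq> 0"
  by (simp add: unitO_iff)

lemma unitO_mult[intro]: "unit_O (f::K) \<Longrightarrow> unit_O g \<Longrightarrow> unit_O (f * g)"
  by (auto simp: unitO_iff)

lemma unitO_inverse[intro]: "unit_O (f::K) \<Longrightarrow> unit_O (inverse f)"
  by (auto simp: unitO_iff)

lemma unitO_divide[intro]: "unit_O (f::K) \<Longrightarrow> unit_O g \<Longrightarrow> unit_O (f / g)"
  by (auto simp: unitO_iff fls_divide_subdegree)

lemma unitO_1[simp]: "unit_O (1::K)"
  by (auto simp: unitO_iff)

lemma unitO_uminus[simp]: "unit_O (- f::K) = unit_O f"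
  by (auto simp: unitO_iff)

lemma unitO_intro: "in_O (f::K) \<Longrightarrow> in_O g \<Longrightarrow> f * g = 1 \<Longrightarrow> unit_O f"
  by (auto simp: unit_O_def)

lemma inO_div_unit[intro]: "in_O (f::K) \<Longrightarrow> unit_O g \<Longrightarrow> in_O (f / g)"
  by (metis divide_inverse inO_mult unitO_inO unitO_inverse)

lemma inO_divI: "(x::K) \<noteq> 0 \<Longrightarrow> y = 0 \<or> fls_subdegree x \<le> fls_subdegree y \<Longrightarrow> in_O (y / x)"
  unfolding in_O_def by (cases "y = 0") (auto simp: fls_divide_subdegree)

lemma X_inv_X_pow: "(fls_X_inv::K) ^ n * fls_X ^ n = 1"
  by (rule fls_eqI) (simp add: fls_X_inv_power_times_conv_shift)

lemma X_X_inv_pow: "(fls_X::K) ^ n * fls_X_inv ^ n = 1"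
  by (metis X_inv_X_pow mult.commute)

lemma pivot2: "\<exists>p q r s. in_O p \<and> in_O q \<and> in_O r \<and> in_O s \<and> unit_O (p*s - q*r) \<and> r*x + s*(y::K) = 0"
proof (cases "y = 0")
  case True then show ?thesis by (intro exI[of _ 1] exI[of _ 0]) auto
next
  case ynz: False
  show ?thesis
  proof (cases "x \<noteq> 0 \<and> fls_subdegree x \<le> fls_subdegree y")
    case True
    then show ?thesis
      by (intro exI[of _ 1] exI[of _ 0] exI[of _ "- (y/x)"]) (auto intro!: inO_divI)
  next
    case False
    then have "in_O (x / y)" using ynz by (intro inO_divI) auto
    then show ?thesis using ynz
      by (intro exI[of _ 0] exI[of _ 1] exI[of _ 1] exI[of _ "- (x/y)"]) auto
  qed
qed

lemma normalize_entry: "\<exists>j z e. unit_O z \<and> in_O e \<and> (w::K) + e = fls_X_inv ^ j * z"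
proof (cases "in_O w")
  case True
  then show ?thesis by (intro exI[of _ 0] exI[of _ 1] exI[of _ "1 - w"]) auto
next
  case False
  then have wnz: "w \<noteq> 0" and neg: "fls_subdegree w < 0" unfolding in_O_def by auto
  define j where "j = nat (- fls_subdegree w)"
  define z where "z = fls_X ^ j * w"
  have "z \<noteq> 0" using wnz by (simp add: z_def)
  moreover have "fls_subdegree z = 0" using wnz neg by (simp add: z_def j_def)
  ultimately have "unit_O z" by (simp add: unitO_iff)
  moreover have "w = fls_X_inv ^ j * z"
    by (simp add: z_def mult.assoc[symmetric] X_inv_X_pow)
  ultimately show ?thesis by (intro exI[of _ j] exI[of _ z] exI[of _ 0]) auto
qed

lemma nth_eval_tinv: "fls_nth (eval_tinv q) n = (if n \<le> 0 then coeff q (nat (-n)) else 0)"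
proof -
  have "fls_nth (eval_tinv q) n = (\<Sum>m\<le>degree q. coeff q m * (if n = - int m then 1 else 0))"
    by (simp add: eval_tinv_def fls_nth_sum)
  also have "\<dots> = (\<Sum>m\<in>{..degree q} \<inter> {nat (-n)}. if n \<le> 0 then coeff q m else 0)"
    by (rule sum.mono_neutral_cong_right) (auto split: if_splits)
  also have "\<dots> = (if n \<le> 0 then coeff q (nat (-n)) else 0)"
    by (cases "nat (-n) \<le> degree q") (auto simp: coeff_eq_0)
  finally show ?thesis .
qed

lemma nth_eval_tinv_tCt: "in_tCt q \<Longrightarrow> fls_nth (eval_tinv q) n = (if n < 0 then coeff q (nat (-n)) else 0)"
  by (auto simp: nth_eval_tinv in_tCt_def)

lemma nth_pp: "fls_nth (principal_part f) n = (if n < 0 then fls_nth f n else 0)"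
  by (auto simp: principal_part_def nth_eval_tinv)

lemma tCt_prpart: "in_tCt (fls_prpart f)"
  by (simp add: in_tCt_def)

lemma inO_sub_pp: "in_O (f - principal_part f)"
  by (simp add: inO_iff nth_pp)

lemma pp_unique: "in_tCt q \<Longrightarrow> in_O (eval_tinv q - f) \<Longrightarrow> eval_tinv q = principal_part f"
  by (rule fls_eqI) (auto simp: inO_iff nth_pp nth_eval_tinv_tCt)

lemma index_separate:
  assumes u: "unit_O (u::K)" and v: "unit_O v" and O: "in_O (fls_X_inv ^ k * u - fls_X_inv ^ i * v)"
  shows "i = k"
proof (rule ccontr)
  assume ne: "i \<noteq> k"
  have sd: "fls_subdegree (fls_X_inv ^ k * u) = - int k" "fls_subdegree (fls_X_inv ^ i * v) = - int i"
    using u v by (auto simp: unitO_iff)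
  have nzu: "fls_X_inv ^ k * u \<noteq> 0" "fls_X_inv ^ i * v \<noteq> 0" using u v by (auto simp: unitO_iff)
  show False
  proof (cases "i < k")
    case True
    have "fls_nth (fls_X_inv ^ k * u - fls_X_inv ^ i * v) (- int k) \<noteq> 0"
      using sd nzu True nth_fls_subdegree_nonzero[of "fls_X_inv ^ k * u"]
      by (simp add: fls_eq0_below_subdegree)
    with O True show False by (auto simp: inO_iff)
  next
    case False
    then have "k < i" using ne by auto
    have "fls_nth (fls_X_inv ^ k * u - fls_X_inv ^ i * v) (- int i) \<noteq> 0"
      using sd nzu \<open>k<i\<close> nth_fls_subdegree_nonzero[of "fls_X_inv ^ i * v"]
      by (simp add: fls_eq0_below_subdegree)
    with O \<open>k<i\<close> show False by (auto simp: inO_iff)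
  qed
qed


definition det3 :: "K \<Rightarrow> K \<Rightarrow> K \<Rightarrow> K \<Rightarrow> K \<Rightarrow> K \<Rightarrow> K \<Rightarrow> K \<Rightarrow> K \<Rightarrow> K" where
  "det3 a b c d e f g h k = a*(e*k - f*h) - b*(d*k - f*g) + c*(d*h - e*g)"

lemma GL3O_det:
  assumes O: "in_O a" "in_O b" "in_O c" "in_O d" "in_O e" "in_O f" "in_O g" "in_O h" "in_O k"
    and U: "unit_O (det3 a b c d e f g h k)"
  shows "M3 a b c d e f g h k \<in> GL3O"
proof -
  define D where "D = det3 a b c d e f g h k"
  have D0: "D \<noteq> 0" using U unitO_nz D_def by auto
  have UD: "unit_O D" using U D_def by simp
  define Di where "Di = inverse D"
  have key: "(a*(e*k - f*h) - b*(d*k - f*g) + c*(d*h - e*g)) * Di = 1"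
    using D0 unfolding Di_def D_def det3_def by simp
  have UDi: "unit_O Di" using UD Di_def by auto
  define B where "B = M3 ((e*k-f*h)*Di) ((c*h-b*k)*Di) ((b*f-c*e)*Di) ((f*g-d*k)*Di) ((a*k-c*g)*Di)
     ((c*d-a*f)*Di) ((d*h-e*g)*Di) ((b*g-a*h)*Di) ((a*e-b*d)*Di)"
  have BO: "\<forall>i<3. \<forall>j<3. in_O (B $$ (i,j))"
    unfolding B_def less3 using O unitO_inO[OF UDi] by (auto simp: M3_index_gen)
  have AO: "\<forall>i<3. \<forall>j<3. in_O (M3 a b c d e f g h k $$ (i,j))"
    unfolding less3 using O by (auto simp: M3_index_gen)
  have "M3 a b c d e f g h k * B = 1\<^sub>m 3"
    unfolding B_def M3_mult one3 M3_eq_iff by (intro conjI; ((rule trans[OF _ key], simp add: algebra_simps) | simp add: algebra_simps))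
  moreover have "B * M3 a b c d e f g h k = 1\<^sub>m 3"
    unfolding B_def M3_mult one3 M3_eq_iff by (intro conjI; ((rule trans[OF _ key], simp add: algebra_simps) | simp add: algebra_simps))
  ultimately show ?thesis unfolding GL3O_def using BO AO
    by (intro CollectI conjI exI[of _ B]) (auto simp: B_def)
qed


definition Oent :: "K mat \<Rightarrow> bool" where
  "Oent A \<longleftrightarrow> (\<forall>i<3. \<forall>j<3. in_O (A $$ (i,j)))"

lemma Oent_M3[simp]: "Oent (M3 a b c d e f g h k) \<longleftrightarrow>
  in_O a \<and> in_O b \<and> in_O c \<and> in_O d \<and> in_O e \<and> in_O f \<and> in_O g \<and> in_O h \<and> in_O k"
  unfolding Oent_def less3 by (auto simp: M3_index_gen)

lemma Oent_mult: "A \<in> carrier_mat 3 3 \<Longrightarrow> B \<in> carrier_mat 3 3 \<Longrightarrow> Oent A \<Longrightarrow> Oent B \<Longrightarrow> Oent (A * B)"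
  apply (subst mat3_eq[of A], assumption, subst mat3_eq[of B], assumption)
  apply (unfold M3_mult Oent_M3)
  apply (unfold Oent_def less3)
  apply (intro conjI inO_add inO_mult; auto)
  done

lemma GL3O_alt: "g \<in> GL3O \<longleftrightarrow> g \<in> carrier_mat 3 3 \<and> Oent g \<and>
   (\<exists>B. B \<in> carrier_mat 3 3 \<and> Oent B \<and> g * B = 1\<^sub>m 3 \<and> B * g = 1\<^sub>m 3)"
  unfolding GL3O_def Oent_def by auto

lemma assoc3: "A \<in> carrier_mat 3 3 \<Longrightarrow> B \<in> carrier_mat 3 3 \<Longrightarrow> C \<in> carrier_mat 3 3 \<Longrightarrow>
  A * B * C = A * (B * (C::K mat))"
  by (rule assoc_mult_mat) auto

lemma GL3O_carrier: "g \<in> GL3O \<Longrightarrow> g \<in> carrier_mat 3 3"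
  unfolding GL3O_def by auto

lemma GL3O_mult: assumes "g1 \<in> GL3O" "g2 \<in> GL3O" shows "g1 * g2 \<in> GL3O"
proof -
  obtain B1 where B1: "B1 \<in> carrier_mat 3 3" "Oent B1" "g1 * B1 = 1\<^sub>m 3" "B1 * g1 = 1\<^sub>m 3"
    and g1: "g1 \<in> carrier_mat 3 3" "Oent g1" using assms(1) unfolding GL3O_alt by auto
  obtain B2 where B2: "B2 \<in> carrier_mat 3 3" "Oent B2" "g2 * B2 = 1\<^sub>m 3" "B2 * g2 = 1\<^sub>m 3"
    and g2: "g2 \<in> carrier_mat 3 3" "Oent g2" using assms(2) unfolding GL3O_alt by auto
  have "g1 * g2 * (B2 * B1) = g1 * (g2 * (B2 * B1))"
    using B1 B2 g1 g2 by (simp add: assoc3)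
  also have "g2 * (B2 * B1) = g2 * B2 * B1" using g2(1) B2(1) B1(1) by (rule assoc3[symmetric])
  also have "\<dots> = B1" unfolding B2(3) using B1(1) by (rule left_mult_one_mat)
  finally have 1: "g1 * g2 * (B2 * B1) = 1\<^sub>m 3" using B1 by simp
  have "B2 * B1 * (g1 * g2) = B2 * (B1 * (g1 * g2))"
    using B1 B2 g1 g2 by (simp add: assoc3)
  also have "B1 * (g1 * g2) = B1 * g1 * g2" using B1(1) g1(1) g2(1) by (rule assoc3[symmetric])
  also have "\<dots> = g2" unfolding B1(4) using g2(1) by (rule left_mult_one_mat)
  finally have 2: "B2 * B1 * (g1 * g2) = 1\<^sub>m 3" using B2 by simp
  show ?thesis unfolding GL3O_alt
    using 1 2 B1 B2 g1 g2 by (intro conjI exI[of _ "B2 * B1"] Oent_mult) auto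
qed

lemma Diag3K_iff: "d \<in> Diag3K \<longleftrightarrow> (\<exists>x y z. x \<noteq> 0 \<and> y \<noteq> 0 \<and> z \<noteq> 0 \<and> d = M3 x 0 0 0 y 0 0 0 z)"
proof
  assume d: "d \<in> Diag3K"
  then have c: "d \<in> carrier_mat 3 3" unfolding Diag3K_def by auto
  from d have "d $$ (0,1) = 0" "d $$ (0,2) = 0" "d $$ (1,0) = 0" "d $$ (1,2) = 0" "d $$ (2,0) = 0" "d $$ (2,1) = 0"
    "d $$ (0,0) \<noteq> 0" "d $$ (1,1) \<noteq> 0" "d $$ (2,2) \<noteq> 0"
    unfolding Diag3K_def by auto
  then show "\<exists>x y z. x \<noteq> 0 \<and> y \<noteq> 0 \<and> z \<noteq> 0 \<and> d = M3 x 0 0 0 y 0 0 0 z"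
    using mat3_eq[OF c] by metis
next
  assume "\<exists>x y z. x \<noteq> 0 \<and> y \<noteq> 0 \<and> z \<noteq> 0 \<and> d = M3 x 0 0 0 y 0 0 0 z"
  then show "d \<in> Diag3K" unfolding Diag3K_def less3 by (auto simp: M3_index_gen)
qed

lemma Diag3K_I: "x \<noteq> 0 \<Longrightarrow> y \<noteq> 0 \<Longrightarrow> z \<noteq> 0 \<Longrightarrow> M3 x 0 0 0 y 0 0 0 z \<in> Diag3K"
  unfolding Diag3K_iff by auto

lemma Diag3K_carrier: "d \<in> Diag3K \<Longrightarrow> d \<in> carrier_mat 3 3"
  unfolding Diag3K_def by auto

lemma Diag3K_mult: "d1 \<in> Diag3K \<Longrightarrow> d2 \<in> Diag3K \<Longrightarrow> d1 * d2 \<in> Diag3K"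
  unfolding Diag3K_iff by (auto simp: M3_mult M3_eq_iff)

lemma same_dcoset_trans:
  assumes A: "A \<in> carrier_mat 3 3" and 1: "same_dcoset A B" and 2: "same_dcoset B C"
  shows "same_dcoset A C"
proof -
  obtain g1 d1 where g1: "g1 \<in> GL3O" "d1 \<in> Diag3K" "B = g1 * A * d1" using 1 unfolding same_dcoset_def by auto
  obtain g2 d2 where g2: "g2 \<in> GL3O" "d2 \<in> Diag3K" "C = g2 * B * d2" using 2 unfolding same_dcoset_def by auto
  have c: "g1 \<in> carrier_mat 3 3" "g2 \<in> carrier_mat 3 3" "d1 \<in> carrier_mat 3 3" "d2 \<in> carrier_mat 3 3"
    using g1 g2 GL3O_carrier Diag3K_carrier by auto
  have "C = (g2 * g1) * A * (d1 * d2)"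
    unfolding g2(3) g1(3) using c A by (simp add: assoc_mult_mat[of _ 3 3 _ 3 _ 3])
  then show ?thesis unfolding same_dcoset_def using g1 g2 GL3O_mult Diag3K_mult by blast
qed

definition linv :: "K mat \<Rightarrow> bool" where
  "linv M \<longleftrightarrow> (\<exists>N \<in> carrier_mat 3 3. N * M = 1\<^sub>m 3)"

lemma linv_sd:
  assumes A: "A \<in> carrier_mat 3 3" and L: "linv A" and S: "same_dcoset A B"
  shows "linv B"
proof -
  obtain g d where gd: "g \<in> GL3O" "d \<in> Diag3K" "B = g * A * d" using S unfolding same_dcoset_def by auto
  obtain N where N: "N \<in> carrier_mat 3 3" "N * A = 1\<^sub>m 3" using L unfolding linv_def by auto
  obtain G where G: "G \<in> carrier_mat 3 3" "G * g = 1\<^sub>m 3" using gd(1) unfolding GL3O_def by auto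
  obtain x y z where d: "x \<noteq> 0" "y \<noteq> 0" "z \<noteq> 0" "d = M3 x 0 0 0 y 0 0 0 z" using gd(2) unfolding Diag3K_iff by auto
  define Di where "Di = M3 (1/x) 0 0 0 (1/y) 0 0 0 (1/z)"
  have DiD: "Di * d = 1\<^sub>m 3" using d unfolding Di_def by (simp add: M3_mult one3)
  have c: "g \<in> carrier_mat 3 3" "d \<in> carrier_mat 3 3" "Di \<in> carrier_mat 3 3"
    using gd GL3O_carrier Diag3K_carrier Di_def by auto
  have "G * B = G * (g * (A * d))" unfolding gd(3) using c A by (simp add: assoc3)
  also have "\<dots> = (G * g) * (A * d)" using G(1) c(1) A c(2) by (intro assoc3[symmetric]) auto
  also have "\<dots> = A * d" using G(2) A c by simp
  finally have e1: "G * B = A * d" .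
  have e2: "N * (A * d) = d" using assoc3[of N A d] N A c by simp
  have "Di * N * G * B = Di * (N * (G * B))" using c N G gd(3) A by (simp add: assoc3)
  also have "\<dots> = 1\<^sub>m 3" unfolding e1 e2 by (rule DiD)
  finally show ?thesis unfolding linv_def using c N G by (intro bexI[of _ "Di * N * G"]) auto
qed

lemma sd_I: "g \<in> GL3O \<Longrightarrow> d \<in> Diag3K \<Longrightarrow> same_dcoset A (g * A * d)"
  unfolding same_dcoset_def by auto

lemma I_Diag: "M3 1 0 0 0 1 0 0 0 (1::K) \<in> Diag3K" by (rule Diag3K_I) auto


lemma linv_M3E: assumes "linv (M3 a b c d e f g h k)"
  obtains n00 n01 n02 n10 n11 n12 n20 n21 n22 where
   "M3 n00 n01 n02 n10 n11 n12 n20 n21 n22 * M3 a b c d e f g h k = M3 1 0 0 0 1 0 0 0 1"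
proof -
  obtain N where N: "N \<in> carrier_mat 3 3" "N * M3 a b c d e f g h k = 1\<^sub>m 3" using assms unfolding linv_def by auto
  show ?thesis using that N(2) mat3_eq[OF N(1)] one3 by metis
qed

lemma nz0: "linv (M3 0 b c 0 e f 0 h (k::K)) \<Longrightarrow> False"
  by (erule linv_M3E) (simp add: M3_mult M3_eq_iff)

lemma nz1: "linv (M3 1 b c 0 0 f 0 0 (k::K)) \<Longrightarrow> False"
  by (erule linv_M3E) (simp add: M3_mult M3_eq_iff)

lemma nz2: "linv (M3 1 b c 0 1 f 0 0 (0::K)) \<Longrightarrow> False"
  by (erule linv_M3E) (simp add: M3_mult M3_eq_iff)

lemma det3_simps: "det3 1 0 0 0 p q 0 r s = p * s - q * r"
  "det3 p q 0 r s 0 0 0 1 = p * s - q * r"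
  by (simp_all add: det3_def algebra_simps)

lemma step1: "\<exists>d' e' f' h' k'. same_dcoset (M3 a b c d e f g h (k::K)) (M3 a b c d' e' f' 0 h' k')"
proof -
  obtain p q r s where pq: "in_O p" "in_O q" "in_O r" "in_O s" "unit_O (p*s - q*r)" "r*d + s*g = 0"
    using pivot2 by blast
  have G: "M3 1 0 0 0 p q 0 r s \<in> GL3O" by (rule GL3O_det) (use pq in \<open>auto simp: det3_simps\<close>)
  have "same_dcoset (M3 a b c d e f g h k) (M3 1 0 0 0 p q 0 r s * M3 a b c d e f g h k * M3 1 0 0 0 1 0 0 0 1)"
    by (rule sd_I[OF G I_Diag])
  then show ?thesis using pq(6) by (simp add: M3_mult) blast
qed

lemma step2: "\<exists>a' b' c' e' f'. same_dcoset (M3 a b c d e f 0 h (k::K)) (M3 a' b' c' 0 e' f' 0 h k)"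
proof -
  obtain p q r s where pq: "in_O p" "in_O q" "in_O r" "in_O s" "unit_O (p*s - q*r)" "r*a + s*d = 0"
    using pivot2 by blast
  have G: "M3 p q 0 r s 0 0 0 1 \<in> GL3O" by (rule GL3O_det) (use pq in \<open>auto simp: det3_simps\<close>)
  have "same_dcoset (M3 a b c d e f 0 h k) (M3 p q 0 r s 0 0 0 1 * M3 a b c d e f 0 h k * M3 1 0 0 0 1 0 0 0 1)"
    by (rule sd_I[OF G I_Diag])
  then show ?thesis using pq(6) by (simp add: M3_mult) blast
qed

lemma GL3O_I: "(M3 1 0 0 0 1 0 0 0 1 :: K mat) \<in> GL3O"
  by (rule GL3O_det) (auto simp: det3_def)

lemma step3: assumes "linv (M3 a b c 0 e f 0 h (k::K))"
  shows "same_dcoset (M3 a b c 0 e f 0 h k) (M3 1 b c 0 e f 0 h k)"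
proof -
  have "a \<noteq> 0" using assms nz0 by auto
  have "same_dcoset (M3 a b c 0 e f 0 h k) (M3 1 0 0 0 1 0 0 0 1 * M3 a b c 0 e f 0 h k * M3 (1/a) 0 0 0 1 0 0 0 1)"
    by (rule sd_I[OF GL3O_I Diag3K_I]) (use \<open>a\<noteq>0\<close> in auto)
  then show ?thesis using \<open>a\<noteq>0\<close> by (simp add: M3_mult)
qed

lemma step4: "\<exists>e' f' k'. same_dcoset (M3 1 b c 0 e f 0 h (k::K)) (M3 1 b c 0 e' f' 0 0 k')"
proof -
  obtain p q r s where pq: "in_O p" "in_O q" "in_O r" "in_O s" "unit_O (p*s - q*r)" "r*e + s*h = 0"
    using pivot2 by blast
  have G: "M3 1 0 0 0 p q 0 r s \<in> GL3O" by (rule GL3O_det) (use pq in \<open>auto simp: det3_simps\<close>)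
  have "same_dcoset (M3 1 b c 0 e f 0 h k) (M3 1 0 0 0 p q 0 r s * M3 1 b c 0 e f 0 h k * M3 1 0 0 0 1 0 0 0 1)"
    by (rule sd_I[OF G I_Diag])
  then show ?thesis using pq(6) by (simp add: M3_mult) blast
qed

lemma step5: assumes "linv (M3 1 b c 0 e f 0 0 (k::K))"
  shows "same_dcoset (M3 1 b c 0 e f 0 0 k) (M3 1 (b/e) c 0 1 f 0 0 k)"
proof -
  have "e \<noteq> 0" using assms nz1 by auto
  have "same_dcoset (M3 1 b c 0 e f 0 0 k) (M3 1 0 0 0 1 0 0 0 1 * M3 1 b c 0 e f 0 0 k * M3 1 0 0 0 (1/e) 0 0 0 1)"
    by (rule sd_I[OF GL3O_I Diag3K_I]) (use \<open>e\<noteq>0\<close> in auto)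
  then show ?thesis using \<open>e\<noteq>0\<close> by (simp add: M3_mult)
qed

lemma step6: assumes "linv (M3 1 b c 0 1 f 0 0 (k::K))"
  shows "same_dcoset (M3 1 b c 0 1 f 0 0 k) (M3 1 b (c/k) 0 1 (f/k) 0 0 1)"
proof -
  have "k \<noteq> 0" using assms nz2 by auto
  have "same_dcoset (M3 1 b c 0 1 f 0 0 k) (M3 1 0 0 0 1 0 0 0 1 * M3 1 b c 0 1 f 0 0 k * M3 1 0 0 0 1 0 0 0 (1/k))"
    by (rule sd_I[OF GL3O_I Diag3K_I]) (use \<open>k\<noteq>0\<close> in auto)
  then show ?thesis using \<open>k\<noteq>0\<close> by (simp add: M3_mult)
qed

lemma step7: "\<exists>j u'. same_dcoset (M3 1 u v 0 1 w 0 0 (1::K)) (M3 1 u' v 0 1 (fls_X_inv ^ j) 0 0 1)"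
proof -
  obtain j z e where jz: "unit_O z" "in_O e" "w + e = fls_X_inv ^ j * z" using normalize_entry by blast
  have z0: "z \<noteq> 0" using jz unitO_nz by auto
  have G: "M3 1 0 0 0 (1/z) (e/z) 0 0 1 \<in> GL3O"
    by (rule GL3O_det) (use jz in \<open>auto simp: det3_def\<close>)
  have "same_dcoset (M3 1 u v 0 1 w 0 0 1) (M3 1 0 0 0 (1/z) (e/z) 0 0 1 * M3 1 u v 0 1 w 0 0 1 * M3 1 0 0 0 z 0 0 0 1)"
    by (rule sd_I[OF G Diag3K_I]) (use z0 in auto)
  moreover have "(w/z + e/z) = fls_X_inv ^ j" using jz(3) z0 by (simp add: field_simps)
  ultimately show ?thesis using z0 by (simp add: M3_mult) blast
qed

lemma step8: "\<exists>i v'. same_dcoset (M3 1 u v 0 1 x 0 0 (1::K)) (M3 1 (fls_X_inv ^ i) v' 0 1 x 0 0 1)"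
proof -
  obtain i z e where jz: "unit_O z" "in_O e" "u + e = fls_X_inv ^ i * z" using normalize_entry by blast
  have z0: "z \<noteq> 0" using jz unitO_nz by auto
  have G: "M3 (1/z) (e/z) 0 0 1 0 0 0 1 \<in> GL3O"
    by (rule GL3O_det) (use jz in \<open>auto simp: det3_def\<close>)
  have "same_dcoset (M3 1 u v 0 1 x 0 0 1) (M3 (1/z) (e/z) 0 0 1 0 0 0 1 * M3 1 u v 0 1 x 0 0 1 * M3 z 0 0 0 1 0 0 0 1)"
    by (rule sd_I[OF G Diag3K_I]) (use z0 in auto)
  moreover have "(u/z + e/z) = fls_X_inv ^ i" using jz(3) z0 by (simp add: field_simps)
  ultimately show ?thesis using z0 by (auto simp: M3_mult)
qed

lemma T_M3: "T i j q = M3 1 (fls_X_inv ^ i) (eval_tinv q) 0 1 (fls_X_inv ^ j) 0 0 1"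
  by (simp add: T_def M3_def)

lemma step9: "same_dcoset (M3 1 x v 0 1 y 0 0 (1::K)) (M3 1 x (principal_part v) 0 1 y 0 0 1)"
proof -
  define e where "e = v - principal_part v"
  have eO: "in_O e" unfolding e_def by (rule inO_sub_pp)
  have G: "M3 1 0 (- e) 0 1 0 0 0 1 \<in> GL3O"
    by (rule GL3O_det) (use eO in \<open>auto simp: det3_def\<close>)
  have "same_dcoset (M3 1 x v 0 1 y 0 0 1) (M3 1 0 (- e) 0 1 0 0 0 1 * M3 1 x v 0 1 y 0 0 1 * M3 1 0 0 0 1 0 0 0 1)"
    by (rule sd_I[OF G I_Diag])
  then show ?thesis by (simp add: M3_mult e_def)
qed

lemma partA: assumes "A \<in> GL3K" shows "\<exists>i j q. in_tCt q \<and> same_dcoset A (T i j q)"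
proof -
  have Ac: "A \<in> carrier_mat 3 3" and inv: "invertible_mat A" using assms unfolding GL3K_def by auto
  obtain B where "A * B = 1\<^sub>m 3" "B * A = 1\<^sub>m (dim_row B)"
    using inv Ac unfolding invertible_mat_def inverts_mat_def by auto
  then have "B \<in> carrier_mat 3 3" using Ac
    by (metis carrier_matD(2) carrier_matI index_mult_mat(3) index_one_mat(2,3) index_mult_mat(2))
  then have L: "linv A" unfolding linv_def using \<open>B * A = _\<close> by auto
  let ?A = "M3 (A$$(0,0)) (A$$(0,1)) (A$$(0,2)) (A$$(1,0)) (A$$(1,1)) (A$$(1,2)) (A$$(2,0)) (A$$(2,1)) (A$$(2,2))"
  have AA: "A = ?A" by (rule mat3_eq[OF Ac])
  obtain d1 e1 f1 h1 k1 where s1: "same_dcoset A (M3 (A$$(0,0)) (A$$(0,1)) (A$$(0,2)) d1 e1 f1 0 h1 k1)"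
    using step1 AA by metis
  obtain a2 b2 c2 e2 f2 where s2: "same_dcoset (M3 (A$$(0,0)) (A$$(0,1)) (A$$(0,2)) d1 e1 f1 0 h1 k1) (M3 a2 b2 c2 0 e2 f2 0 h1 k1)"
    using step2 by blast
  have t2: "same_dcoset A (M3 a2 b2 c2 0 e2 f2 0 h1 k1)" by (rule same_dcoset_trans[OF Ac s1 s2])
  have L2: "linv (M3 a2 b2 c2 0 e2 f2 0 h1 k1)" by (rule linv_sd[OF Ac L t2])
  have t3: "same_dcoset A (M3 1 b2 c2 0 e2 f2 0 h1 k1)" by (rule same_dcoset_trans[OF Ac t2 step3[OF L2]])
  obtain e4 f4 k4 where s4: "same_dcoset (M3 1 b2 c2 0 e2 f2 0 h1 k1) (M3 1 b2 c2 0 e4 f4 0 0 k4)"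
    using step4 by blast
  have t4: "same_dcoset A (M3 1 b2 c2 0 e4 f4 0 0 k4)" by (rule same_dcoset_trans[OF Ac t3 s4])
  have L4: "linv (M3 1 b2 c2 0 e4 f4 0 0 k4)" by (rule linv_sd[OF Ac L t4])
  have t5: "same_dcoset A (M3 1 (b2/e4) c2 0 1 f4 0 0 k4)" by (rule same_dcoset_trans[OF Ac t4 step5[OF L4]])
  have L5: "linv (M3 1 (b2/e4) c2 0 1 f4 0 0 k4)" by (rule linv_sd[OF Ac L t5])
  have t6: "same_dcoset A (M3 1 (b2/e4) (c2/k4) 0 1 (f4/k4) 0 0 1)" by (rule same_dcoset_trans[OF Ac t5 step6[OF L5]])
  obtain j u7 where s7: "same_dcoset (M3 1 (b2/e4) (c2/k4) 0 1 (f4/k4) 0 0 1) (M3 1 u7 (c2/k4) 0 1 (fls_X_inv ^ j) 0 0 1)"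
    using step7 by blast
  have t7: "same_dcoset A (M3 1 u7 (c2/k4) 0 1 (fls_X_inv ^ j) 0 0 1)" by (rule same_dcoset_trans[OF Ac t6 s7])
  obtain i v8 where s8: "same_dcoset (M3 1 u7 (c2/k4) 0 1 (fls_X_inv ^ j) 0 0 1) (M3 1 (fls_X_inv ^ i) v8 0 1 (fls_X_inv ^ j) 0 0 1)"
    using step8 by blast
  have t8: "same_dcoset A (M3 1 (fls_X_inv ^ i) v8 0 1 (fls_X_inv ^ j) 0 0 1)" by (rule same_dcoset_trans[OF Ac t7 s8])
  have t9: "same_dcoset A (M3 1 (fls_X_inv ^ i) (principal_part v8) 0 1 (fls_X_inv ^ j) 0 0 1)"
    by (rule same_dcoset_trans[OF Ac t8 step9])
  then have "same_dcoset A (T i j (fls_prpart v8))" unfolding T_M3 principal_part_def .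
  then show ?thesis using tCt_prpart by blast
qed


lemma sd_U:
  assumes S: "same_dcoset (M3 1 a c 0 1 b 0 0 1) (M3 1 a' c' 0 1 b' 0 0 (1::K))"
  shows "\<exists>d0 d1 d2. unit_O d0 \<and> unit_O d1 \<and> unit_O d2 \<and> in_O (a'*d1 - a*d0) \<and> in_O (b'*d2 - b*d1)
     \<and> in_O (c'*d2 - (a'*d1 - a*d0)*b - c*d0)"
proof -
  obtain g d where gd: "g \<in> GL3O" "d \<in> Diag3K" "M3 1 a' c' 0 1 b' 0 0 1 = g * M3 1 a c 0 1 b 0 0 1 * d"
    using S unfolding same_dcoset_def by auto
  obtain x y z where d: "x \<noteq> 0" "y \<noteq> 0" "z \<noteq> 0" "d = M3 x 0 0 0 y 0 0 0 z" using gd(2) unfolding Diag3K_iff by auto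
  obtain B where g: "g \<in> carrier_mat 3 3" "Oent g" and B: "B \<in> carrier_mat 3 3" "Oent B" "g * B = 1\<^sub>m 3" "B * g = 1\<^sub>m 3"
    using gd(1) unfolding GL3O_alt by auto
  obtain g00 g01 g02 g10 g11 g12 g20 g21 g22 where gM: "g = M3 g00 g01 g02 g10 g11 g12 g20 g21 g22"
    using mat3_eq[OF g(1)] by metis
  obtain b00 b01 b02 b10 b11 b12 b20 b21 b22 where bM: "B = M3 b00 b01 b02 b10 b11 b12 b20 b21 b22"
    using mat3_eq[OF B(1)] by metis
  have gO: "in_O g00" "in_O g01" "in_O g02" "in_O g10" "in_O g11" "in_O g12" "in_O g20" "in_O g21" "in_O g22"
    using g(2) unfolding gM by auto
  have bO: "in_O b00" "in_O b11" "in_O b22"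
    using B(2) unfolding bM by auto
  have E: "g00 * x = 1" "(g00 * a + g01) * y = a'" "(g00 * c + g01 * b + g02) * z = c'"
     "g10 * x = 0" "(g10 * a + g11) * y = 1" "(g10 * c + g11 * b + g12) * z = b'"
     "g20 * x = 0" "(g20 * a + g21) * y = 0" "(g20 * c + g21 * b + g22) * z = 1"
    using gd(3) unfolding gM d(4) M3_mult M3_eq_iff by (simp_all add: algebra_simps)
  have z1: "g10 = 0" "g20 = 0" using E d by auto
  then have z2: "g21 = 0" using E d by auto
  have E2: "g11 * y = 1" "(g11 * b + g12) * z = b'" "g22 * z = 1" "g01 * y = a' - g00 * a * y"
    using E z1 z2 by (auto simp: algebra_simps)
  have BE: "b00 * g00 + b01 * g10 + b02 * g20 = 1" "b10 * g00 + b11 * g10 + b12 * g20 = 0"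
     "b10 * g01 + b11 * g11 + b12 * g21 = 1" "g20 * b02 + g21 * b12 + g22 * b22 = 1"
    using B(4) B(3) unfolding gM bM M3_mult M3_eq_iff one3 by simp_all
  have g00nz: "g00 \<noteq> 0" using E(1) by auto
  have u0: "unit_O g00" using BE(1) z1 gO bO by (intro unitO_intro[of _ b00]) (auto simp: mult.commute)
  have "b10 = 0" using BE(2) z1 g00nz by simp
  then have u1: "unit_O g11" using BE(3) z2 gO bO by (intro unitO_intro[of _ b11]) (auto simp: mult.commute)
  have u2: "unit_O g22" using BE(4) z1 z2 gO bO by (intro unitO_intro[of _ b22]) auto
  have c1: "a' * g11 - a * g00 = g01"
  proof -
    have "a' * g11 = (g00 * a + g01) * (y * g11)" using E(2)[symmetric] by (simp add: algebra_simps)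
    also have "y * g11 = 1" using E2(1) by (simp add: mult.commute)
    finally show ?thesis by (simp add: algebra_simps)
  qed
  have c2: "b' * g22 - b * g11 = g12"
  proof -
    have "b' * g22 = (g11 * b + g12) * (z * g22)" using E2(2)[symmetric] by (simp add: algebra_simps)
    also have "z * g22 = 1" using E2(3) by (simp add: mult.commute)
    finally show ?thesis by (simp add: algebra_simps)
  qed
  have c3: "c' * g22 - (a' * g11 - a * g00) * b - c * g00 = g02"
  proof -
    have "c' * g22 = (g00 * c + g01 * b + g02) * (z * g22)" using E(3)[symmetric] by (simp add: algebra_simps)
    also have "z * g22 = 1" using E2(3) by (simp add: mult.commute)
    finally show ?thesis unfolding c1 by (simp add: algebra_simps)
  qed
  show ?thesis using u0 u1 u2 gO c1 c2 c3 by (intro exI[of _ g00] exI[of _ g11] exI[of _ g22]) auto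
qed

lemma sd_U_I:
  assumes u: "unit_O d0" "unit_O d1" "unit_O (d2::K)"
   and O: "in_O (a'*d1 - a*d0)" "in_O (b'*d2 - b*d1)" "in_O (c'*d2 - (a'*d1 - a*d0)*b - c*d0)"
  shows "same_dcoset (M3 1 a c 0 1 b 0 0 1) (M3 1 a' c' 0 1 b' 0 0 1)"
proof -
  have nz: "d0 \<noteq> 0" "d1 \<noteq> 0" "d2 \<noteq> 0" using u unitO_nz by auto
  define G where "G = M3 d0 (a'*d1 - a*d0) (c'*d2 - (a'*d1 - a*d0)*b - c*d0) 0 d1 (b'*d2 - b*d1) 0 0 d2"
  have "unit_O (d0 * d1 * d2)" using u by auto
  then have G: "G \<in> GL3O" unfolding G_def
    by (intro GL3O_det) (use u O unitO_inO in \<open>auto simp: det3_def mult.assoc\<close>)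
  have "same_dcoset (M3 1 a c 0 1 b 0 0 1) (G * M3 1 a c 0 1 b 0 0 1 * M3 (1/d0) 0 0 0 (1/d1) 0 0 0 (1/d2))"
    by (rule sd_I[OF G Diag3K_I]) (use nz in auto)
  moreover have "G * M3 1 a c 0 1 b 0 0 1 * M3 (1/d0) 0 0 0 (1/d1) 0 0 0 (1/d2) = M3 1 a' c' 0 1 b' 0 0 1"
    unfolding G_def M3_mult M3_eq_iff using nz by (simp add: field_simps)
  ultimately show ?thesis by simp
qed


lemma partB: assumes "same_dcoset (T i j q1) (T k l q2)" shows "i = k \<and> j = l"
proof -
  obtain d0 d1 d2 where u: "unit_O d0" "unit_O d1" "unit_O d2"
    and O: "in_O (fls_X_inv ^ k * d1 - fls_X_inv ^ i * d0)" "in_O (fls_X_inv ^ l * d2 - fls_X_inv ^ j * d1)"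
    using sd_U[OF assms[unfolded T_M3]] by blast
  show ?thesis using index_separate[OF u(2) u(1) O(1)] index_separate[OF u(3) u(2) O(2)] by simp
qed

lemma partC1:
  assumes q2: "in_tCt q2" and S: "same_dcoset (T i j q1) (T i j q2)"
  shows "\<exists>y1 y2. unit_O y1 \<and> unit_O y2 \<and> cong_O y2 1 j \<and> cong_O y2 y1 i \<and>
             eval_tinv q2 = principal_part
               (y1 * eval_tinv q1 + (y2 - y1) * fls_X_inv ^ (i + j))"
proof -
  obtain d0 d1 d2 where u: "unit_O d0" "unit_O d1" "unit_O d2"
    and O: "in_O (fls_X_inv ^ i * d1 - fls_X_inv ^ i * d0)" "in_O (fls_X_inv ^ j * d2 - fls_X_inv ^ j * d1)"
     "in_O (eval_tinv q2 * d2 - (fls_X_inv ^ i * d1 - fls_X_inv ^ i * d0) * fls_X_inv ^ j - eval_tinv q1 * d0)"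
    using sd_U[OF S[unfolded T_M3]] by blast
  define w where "w = inverse d2"
  have uw: "unit_O w" using u unfolding w_def by auto
  have wO: "in_O w" using uw unitO_inO by auto
  have d2nz: "d2 \<noteq> 0" using u unitO_nz by auto
  have dw: "d2 * w = 1" using d2nz unfolding w_def by simp
  define y1 where "y1 = d0 * w"
  define y2 where "y2 = d1 * w"
  have uy: "unit_O y1" "unit_O y2" unfolding y1_def y2_def using u uw by auto
  have "y2 - 1 = fls_X ^ j * (- (fls_X_inv ^ j * d2 - fls_X_inv ^ j * d1) * w)"
  proof -
    have "fls_X ^ j * (- (fls_X_inv ^ j * d2 - fls_X_inv ^ j * d1) * w) =
      - (fls_X ^ j * fls_X_inv ^ j) * (d2 * w) + (fls_X ^ j * fls_X_inv ^ j) * d1 * w"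
      by (simp add: algebra_simps)
    then show ?thesis unfolding X_X_inv_pow dw y2_def by simp
  qed
  moreover have "in_O (- (fls_X_inv ^ j * d2 - fls_X_inv ^ j * d1) * w)"
    using O(2) wO by (intro inO_mult inO_uminus)
  ultimately have cj: "cong_O y2 1 j" unfolding cong_O_def by blast
  have "y2 - y1 = fls_X ^ i * ((fls_X_inv ^ i * d1 - fls_X_inv ^ i * d0) * w)"
  proof -
    have "fls_X ^ i * ((fls_X_inv ^ i * d1 - fls_X_inv ^ i * d0) * w) =
      (fls_X ^ i * fls_X_inv ^ i) * d1 * w - (fls_X ^ i * fls_X_inv ^ i) * d0 * w"
      by (simp add: algebra_simps)
    then show ?thesis unfolding X_X_inv_pow y1_def y2_def by simp
  qed
  moreover have "in_O ((fls_X_inv ^ i * d1 - fls_X_inv ^ i * d0) * w)"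
    using O(1) wO by (intro inO_mult)
  ultimately have ci: "cong_O y2 y1 i" unfolding cong_O_def by blast
  have "(eval_tinv q2 * d2 - (fls_X_inv ^ i * d1 - fls_X_inv ^ i * d0) * fls_X_inv ^ j - eval_tinv q1 * d0) * w
     = eval_tinv q2 * (d2 * w) - (y1 * eval_tinv q1 + (y2 - y1) * fls_X_inv ^ (i + j))"
    unfolding y1_def y2_def power_add by (simp add: algebra_simps)
  then have "in_O (eval_tinv q2 - (y1 * eval_tinv q1 + (y2 - y1) * fls_X_inv ^ (i + j)))"
    using O(3) wO dw by (metis inO_mult mult_1_right)
  then have "eval_tinv q2 = principal_part (y1 * eval_tinv q1 + (y2 - y1) * fls_X_inv ^ (i + j))"
    by (rule pp_unique[OF q2])
  then show ?thesis using uy cj ci by blast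
qed

lemma partC2:
  assumes u: "unit_O y1" "unit_O y2" and cj: "cong_O y2 1 j" and ci: "cong_O y2 y1 i"
   and E: "eval_tinv q2 = principal_part (y1 * eval_tinv q1 + (y2 - y1) * fls_X_inv ^ (i + j))"
  shows "same_dcoset (T i j q1) (T i j q2)"
proof -
  obtain z where z: "in_O z" "y2 - y1 = fls_X ^ i * z" using ci unfolding cong_O_def by auto
  obtain z' where z': "in_O z'" "y2 - 1 = fls_X ^ j * z'" using cj unfolding cong_O_def by auto
  have O1: "in_O (fls_X_inv ^ i * y2 - fls_X_inv ^ i * y1)"
  proof -
    have "fls_X_inv ^ i * y2 - fls_X_inv ^ i * y1 = fls_X_inv ^ i * (y2 - y1)" by (simp add: algebra_simps)
    also have "\<dots> = (fls_X_inv ^ i * fls_X ^ i) * z" unfolding z(2) by (simp add: mult.assoc)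
    finally show ?thesis using z(1) by (simp add: X_inv_X_pow)
  qed
  have O2: "in_O (fls_X_inv ^ j * 1 - fls_X_inv ^ j * y2)"
  proof -
    have "fls_X_inv ^ j * 1 - fls_X_inv ^ j * y2 = - (fls_X_inv ^ j * (y2 - 1))" by (simp add: algebra_simps)
    also have "\<dots> = - ((fls_X_inv ^ j * fls_X ^ j) * z')" unfolding z'(2) by (simp add: mult.assoc)
    finally show ?thesis using z'(1) by (simp add: X_inv_X_pow)
  qed
  define S where "S = y1 * eval_tinv q1 + (y2 - y1) * fls_X_inv ^ (i + j)"
  have "eval_tinv q2 * 1 - (fls_X_inv ^ i * y2 - fls_X_inv ^ i * y1) * fls_X_inv ^ j - eval_tinv q1 * y1
     = - (S - principal_part S)"
    unfolding E S_def power_add by (simp add: algebra_simps)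
  then have O3: "in_O (eval_tinv q2 * 1 - (fls_X_inv ^ i * y2 - fls_X_inv ^ i * y1) * fls_X_inv ^ j - eval_tinv q1 * y1)"
    using inO_uminus[OF inO_sub_pp[of S]] by metis
  show ?thesis unfolding T_M3 by (rule sd_U_I[OF u unitO_1 O1 O2 O3])
qed

theorem mainTheorem11:
  shows "(\<forall>A\<in>GL3K. \<exists>i j q. in_tCt q \<and> same_dcoset A (T i j q))
   \<and> (\<forall>i j k l q1 q2. in_tCt q1 \<longrightarrow> in_tCt q2 \<longrightarrow>
        same_dcoset (T i j q1) (T k l q2) \<longrightarrow> i = k \<and> j = l)
   \<and> (\<forall>i j q1 q2. in_tCt q1 \<longrightarrow> in_tCt q2 \<longrightarrow>
        (same_dcoset (T i j q1) (T i j q2) \<longleftrightarrow>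
          (\<exists>y1 y2. unit_O y1 \<and> unit_O y2 \<and> cong_O y2 1 j \<and> cong_O y2 y1 i \<and>
             eval_tinv q2 = principal_part
               (y1 * eval_tinv q1 + (y2 - y1) * fls_X_inv ^ (i + j)))))"
  using partA partB partC1 partC2 by blast

end
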